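(* For $k\in\mathbb{N}$ let $a_k=\dfrac{|B_{2k}|\,(2k-2)\,4^{k}}{(2k)!}$, where $B_{2k}$ denotes the Bernoulli number. For every $x\in(0,\pi/2)$ and every integer $m\ge 2$, $$2+\sum_{k=2}^{m-1}a_k x^{2k}+\Big(\frac{2x}{\pi}\Big)^{2m}\Big(\frac{\pi^2}{4}-2-\sum_{k=2}^{m-1}a_k\Big(\frac{\pi}{2}\Big)^{2k}\Big)>\Big(\frac{x}{\sin x}\Big)^{2}+\frac{x}{\tan x}>2+\sum_{k=2}^{m}a_k x^{2k},$$ where empty sums equal $0$.
   Context: $B_j$ are the Bernoulli numbers ($B_2=1/6$, $B_4=-1/30$, $B_6=1/42,\dots$). *)

theory Defs
  imports "HOL-Analysis.Analysis"
begin

(* Only even-index values are used, which are convention-independent: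
   B_2 = 1/6, B_4 = -1/30, B_6 = 1/42, ... *)
fun bernoulli :: "nat \<Rightarrow> real" where
  "bernoulli n = (if n = 0 then 1 else
     - (\<Sum>k<n. real (Suc n choose k) * bernoulli k) / real (Suc n))"

declare bernoulli.simps [simp del]

definition a_coeff :: "nat \<Rightarrow> real" where
  "a_coeff k = \<bar>bernoulli (2*k)\<bar> * (2 * real k - 2) * 4 ^ k / fact (2*k)"

lemma bernoulli_check: "bernoulli 2 = 1/6" "bernoulli 4 = -1/30" "bernoulli 6 = 1/42"
  by (simp_all add: bernoulli.simps lessThan_Suc numeral_eq_Suc)

end

theory Submission
  imports Defs "HOL-Complex_Analysis.Complex_Analysis"
begin

lemma bern_rec:
  assumes "n > 0"
  shows "(\<Sum>k\<le>n. real (Suc n choose k) * bernoulli k) = 0"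
proof -
  have "bernoulli n = - (\<Sum>k<n. real (Suc n choose k) * bernoulli k) / real (Suc n)"
    using assms by (subst bernoulli.simps) simp
  hence "(\<Sum>k<n. real (Suc n choose k) * bernoulli k) + real (Suc n) * bernoulli n = 0"
    by (simp add: field_simps)
  moreover have "real (Suc n choose n) = real (Suc n)" by simp
  ultimately show ?thesis by (simp add: lessThan_Suc_atMost[symmetric])
qed

lemma bern_conv:
  "(\<Sum>k=0..n. bernoulli k / fact k * (1 / fact (n - k + 1))) = (if n = 0 then 1 else 0)"
proof (cases "n = 0")
  case True thus ?thesis by (simp add: bernoulli.simps)
next
  case False
  have "(\<Sum>k=0..n. bernoulli k / fact k * (1 / fact (n - k + 1)))
      = (\<Sum>k\<le>n. real (Suc n choose k) * bernoulli k) / fact (Suc n)"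
    unfolding sum_divide_distrib atMost_atLeast0
  proof (rule sum.cong[OF refl])
    fix k assume k: "k \<in> {0..n}"
    hence "fact k * fact (Suc n - k) * (Suc n choose k) = (fact (Suc n) :: nat)"
      by (intro binomial_fact_lemma) auto
    hence "fact k * fact (n - k + 1) * real (Suc n choose k) = fact (Suc n)"
      using k by (metis Suc_diff_le Suc_eq_plus1 atLeastAtMost_iff of_nat_fact of_nat_mult)
    moreover have "fact k > (0::real)" "fact (n - k + 1) > (0::real)" by auto
    ultimately show "bernoulli k / fact k * (1 / fact (n - k + 1)) =
        real (Suc n choose k) * bernoulli k / fact (Suc n)"
      by (simp add: field_simps del: fact_Suc)
  qed
  also have "\<dots> = 0" using bern_rec[of n] False by simp
  finally show ?thesis using False by simp
qed

definition Bc :: "complex fps" where "Bc = Abs_fps (\<lambda>n. of_real (bernoulli n / fact n))"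
definition Ef :: "complex fps" where "Ef = fps_shift 1 (fps_exp 1)"

lemma Bc_nth: "Bc $ n = of_real (bernoulli n / fact n)" by (simp add: Bc_def)

lemma Ef_nth: "Ef $ n = of_real (1 / fact (n + 1))"
  by (simp add: Ef_def algebra_simps)

lemma Bc_Ef: "Bc * Ef = 1"
proof (rule fps_ext)
  fix n
  have "(Bc * Ef) $ n = (\<Sum>i=0..n. of_real (bernoulli i / fact i * (1 / fact (n - i + 1))))"
    by (simp add: fps_mult_nth Bc_nth Ef_nth)
  also have "\<dots> = of_real (\<Sum>i=0..n. bernoulli i / fact i * (1 / fact (n - i + 1)))"
    by simp
  also have "\<dots> = (1 :: complex fps) $ n" by (subst bern_conv) simp
  finally show "(Bc * Ef) $ n = 1 $ n" .
qed

lemma inverse_Ef: "inverse Ef = Bc"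
  by (rule fps_inverse_unique) (simp add: Bc_Ef mult.commute)

lemma Ef_X: "Ef * fps_X = fps_exp 1 - 1"
  by (rule fps_ext) (simp add: Ef_def)

lemma Ef_radius [simp]: "fps_conv_radius Ef = \<infinity>"
  by (simp add: Ef_def)

lemma gE_eq: "eval_fps Ef w * w = exp w - 1"
proof -
  have "eval_fps (Ef * fps_X) w = eval_fps Ef w * w"
    by (subst eval_fps_mult) auto
  thus ?thesis by (simp add: Ef_X eval_fps_diff)
qed

lemma gE_0: "eval_fps Ef 0 = 1"
  by (simp add: eval_fps_at_0 Ef_nth)

lemma gE_nz:
  assumes "norm w < 2 * pi"
  shows "eval_fps Ef w \<noteq> 0"
proof (cases "w = 0")
  case True thus ?thesis by (simp add: gE_0)
next
  case False
  have "exp w \<noteq> 1"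
  proof
    assume "exp w = 1"
    then obtain n :: int where n: "Re w = 0" "Im w = of_int (2 * n) * pi"
      by (auto simp: exp_eq_1)
    have "norm w = \<bar>Im w\<bar>" using n(1) by (simp add: cmod_def)
    also have "\<dots> = 2 * pi * \<bar>of_int n\<bar>" using n(2) by (simp add: abs_mult)
    finally have "\<bar>of_int n\<bar> < (1::real)" using assms by simp
    hence "n = 0" by linarith
    thus False using n False by (simp add: complex_eq_iff)
  qed
  thus ?thesis using gE_eq[of w] by auto
qed

definition G :: "complex \<Rightarrow> complex" where "G w = inverse (eval_fps Ef w)"

lemma G_exp: "G has_fps_expansion Bc"
proof -
  have "(\<lambda>w. inverse (eval_fps Ef w)) has_fps_expansion inverse Ef"
    by (intro has_fps_expansion_inverse eval_fps_has_fps_expansion) (auto simp: Ef_nth)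
  thus ?thesis by (simp add: G_def[abs_def] inverse_Ef)
qed

lemma G_holo: "G holomorphic_on ball 0 (2 * pi)"
  unfolding G_def[abs_def]
  by (intro holomorphic_intros) (auto simp: gE_nz)

lemma G_eq: "norm w < 2 * pi \<Longrightarrow> G w * (exp w - 1) = w"
  using gE_eq[of w] gE_nz[of w] by (simp add: G_def field_simps)

lemma G_0: "G 0 = 1" by (simp add: G_def gE_0)

definition H :: "complex \<Rightarrow> complex" where "H w = G w + G w ^ 2 * exp w"

lemma Bc_ident: "Bc ^ 2 * fps_exp 1 = Bc - fps_X * fps_deriv Bc"
proof -
  have d: "fps_exp 1 = Ef + fps_X * fps_deriv Ef"
  proof -
    have "fps_deriv (Ef * fps_X) = fps_exp 1" by (simp add: Ef_X)
    thus ?thesis by (simp add: algebra_simps)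
  qed
  have e: "fps_deriv Bc * Ef + Bc * fps_deriv Ef = 0"
    using arg_cong[OF Bc_Ef, of fps_deriv] by (metis add.commute fps_deriv_1 fps_deriv_mult)
  have "Bc ^ 2 * fps_exp 1 = Bc * (Bc * Ef) + fps_X * Bc * (Bc * fps_deriv Ef)"
    by (simp add: d power2_eq_square algebra_simps)
  also have "Bc * fps_deriv Ef = - (fps_deriv Bc * Ef)" using e by (metis add.commute eq_neg_iff_add_eq_0)
  also have "Bc * (Bc * Ef) + fps_X * Bc * - (fps_deriv Bc * Ef)
      = Bc * (Bc * Ef) - fps_X * fps_deriv Bc * (Bc * Ef)" by (simp add: algebra_simps)
  finally show ?thesis by (simp add: Bc_Ef)
qed

definition Hf :: "complex fps" where "Hf = Bc + Bc ^ 2 * fps_exp 1"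

lemma Hf_nth: "Hf $ n = of_real ((2 - real n) * (bernoulli n / fact n))"
proof -
  have x: "(fps_X * fps_deriv Bc) $ n = of_nat n * Bc $ n"
    by (cases n) simp_all
  have "Hf $ n = 2 * Bc $ n - (fps_X * fps_deriv Bc) $ n"
    by (simp add: Hf_def Bc_ident)
  also have "\<dots> = of_real ((2 - real n) * (bernoulli n / fact n))"
    unfolding x Bc_nth by (simp add: algebra_simps)
  finally show ?thesis .
qed

lemma H_exp: "H has_fps_expansion Hf"
  unfolding H_def[abs_def] Hf_def
  by (intro fps_expansion_intros G_exp)

lemma H_holo: "H holomorphic_on ball 0 (2 * pi)"
  unfolding H_def[abs_def]
  by (intro holomorphic_intros G_holo)

lemma H_sums: "norm w < 2 * pi \<Longrightarrow> (\<lambda>n. Hf $ n * w ^ n) sums H w"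
  by (rule has_fps_expansion_imp_sums_complex[OF H_exp, of "ereal (2*pi)"]) (use H_holo in auto)

lemma H_val:
  fixes x :: real
  assumes "0 < x" "x < pi"
  shows "H (2 * \<i> * of_real x) = of_real ((x / sin x)^2 + x / tan x) - \<i> * of_real x"
proof -
  define C where "C = complex_of_real (cos x)"
  define S where "S = complex_of_real (sin x)"
  have sx: "sin x > 0" using assms by (intro sin_gt_zero) auto
  hence S0: "S \<noteq> 0" by (simp add: S_def)
  have cs: "C^2 + S^2 = 1" unfolding C_def S_def
    by (metis of_real_add of_real_power of_real_1 sin_cos_squared_add2)
  have eu: "exp (\<i> * of_real x) = C + \<i> * S"
    by (simp add: cis_conv_exp[symmetric] C_def S_def complex_eq_iff)
  define w where "w = 2 * \<i> * complex_of_real x"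
  have ew: "exp w = (C + \<i> * S)^2"
    by (simp add: w_def eu[symmetric] power2_eq_square exp_add[symmetric] algebra_simps)
  have nw: "norm w < 2 * pi" using assms by (simp add: w_def norm_mult)
  have "G w * (exp w - 1) = w" by (rule G_eq[OF nw])
  also have "exp w - 1 = 2 * \<i> * S * (C + \<i> * S)"
    unfolding ew using cs by (simp add: power2_eq_square algebra_simps)
  finally have g1: "G w * (2 * \<i> * S * (C + \<i> * S)) = w" .
  have uu: "(C + \<i> * S) * (C - \<i> * S) = 1"
    using cs by (simp add: power2_eq_square algebra_simps)
  have Gw: "G w = of_real x * (C - \<i> * S) / S"
  proof -
    have "G w * (2 * \<i> * S) = G w * (2 * \<i> * S) * ((C + \<i> * S) * (C - \<i> * S))"
      by (simp add: uu)
    also have "\<dots> = G w * (2 * \<i> * S * (C + \<i> * S)) * (C - \<i> * S)"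
      by (simp only: mult.assoc)
    also have "\<dots> = w * (C - \<i> * S)" by (simp only: g1)
    finally have h: "G w * (2 * \<i> * S) = w * (C - \<i> * S)" .
    have "S * G w = (-\<i>/2) * (G w * (2 * \<i> * S))" by (simp add: algebra_simps)
    also have "\<dots> = (-\<i>/2) * w * (C - \<i> * S)" by (simp add: h)
    also have "\<dots> = of_real x * (C - \<i> * S)" by (simp add: w_def algebra_simps)
    finally show ?thesis using S0 by (simp add: field_simps)
  qed
  have "H w = G w + G w ^ 2 * exp w" by (simp add: H_def)
  also have "\<dots> = of_real x * (C - \<i> * S) / S + of_real x ^ 2 / S ^ 2 * ((C + \<i> * S) * (C - \<i> * S))^2"
    unfolding Gw ew by (simp add: power2_eq_square field_simps)
  also have "\<dots> = of_real x * C / S - \<i> * of_real x + of_real x ^ 2 / S ^ 2"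
    unfolding uu using S0 by (simp add: field_simps)
  also have "\<dots> = of_real ((x / sin x)^2 + x / tan x) - \<i> * of_real x"
    by (simp add: C_def S_def tan_def power_divide)
  finally show ?thesis by (simp add: w_def)
qed

lemma Re_ii_pow: "Re (\<i> ^ n) = (if even n then (-1) ^ (n div 2) else 0)"
proof (cases "even n")
  case True
  then obtain k where "n = 2 * k" by auto
  thus ?thesis by (simp add: power_mult)
next
  case False
  then obtain k where "n = 2 * k + 1" using oddE by blast
  thus ?thesis by (simp add: power_mult)
qed

definition dd :: "nat \<Rightarrow> real" where "dd n = (2 - real n) * (bernoulli n / fact n)"
definition ee :: "nat \<Rightarrow> real" where "ee k = dd (2 * k) * 4 ^ k * (-1) ^ k"

lemma f_series:
  fixes x :: real
  assumes "0 < x" "x < pi"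
  shows "(\<lambda>k. ee k * x ^ (2 * k)) sums ((x / sin x)^2 + x / tan x)"
proof -
  have nw: "norm (2 * \<i> * complex_of_real x) < 2 * pi" using assms by (simp add: norm_mult)
  have "(\<lambda>n. Re (Hf $ n * (2 * \<i> * of_real x) ^ n)) sums Re (H (2 * \<i> * of_real x))"
    by (intro sums_Re H_sums nw)
  also have "Re (H (2 * \<i> * of_real x)) = (x / sin x)^2 + x / tan x"
    using H_val[OF assms] by simp
  also have "(\<lambda>n. Re (Hf $ n * (2 * \<i> * of_real x) ^ n)) =
       (\<lambda>n. dd n * (2 * x) ^ n * (if even n then (-1) ^ (n div 2) else 0))"
  proof
    fix n
    have "Hf $ n * (2 * \<i> * of_real x) ^ n = of_real (dd n * (2 * x) ^ n) * \<i> ^ n"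
      by (simp add: Hf_nth dd_def power_mult_distrib)
    thus "Re (Hf $ n * (2 * \<i> * of_real x) ^ n) = dd n * (2 * x) ^ n * (if even n then (-1) ^ (n div 2) else 0)"
      by (simp add: Re_ii_pow)
  qed
  finally have *: "(\<lambda>n. dd n * (2 * x) ^ n * (if even n then (-1) ^ (n div 2) else 0)) sums ((x / sin x)^2 + x / tan x)" .
  define F where "F = (\<lambda>n. dd n * (2 * x) ^ n * (if even n then (-1) ^ (n div 2) else (0::real)))"
  have "(\<lambda>k. F (2 * k)) sums ((x / sin x)^2 + x / tan x) \<longleftrightarrow> F sums ((x / sin x)^2 + x / tan x)"
  proof (rule sums_mono_reindex)
    show "strict_mono (\<lambda>k::nat. 2 * k)" by (auto simp: strict_mono_def)
    fix n assume "n \<notin> range (\<lambda>k::nat. 2 * k)"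
    hence "odd n" by (metis dvd_mult_div_cancel rangeI)
    thus "F n = 0" by (simp add: F_def)
  qed
  hence "(\<lambda>k. dd (2 * k) * (2 * x) ^ (2 * k) * (if even (2 * k) then (-1) ^ (2 * k div 2) else 0)) sums ((x / sin x)^2 + x / tan x)"
    using * by (simp add: F_def)
  moreover have "(\<lambda>k. dd (2 * k) * (2 * x) ^ (2 * k) * (if even (2 * k) then (-1) ^ (2 * k div 2) else 0)) = (\<lambda>k. ee k * x ^ (2 * k))"
  proof
    fix k
    have "(2 * x) ^ (2 * k) = (2::real) ^ (2 * k) * x ^ (2 * k)" by (simp add: power_mult_distrib)
    moreover have "(2::real) ^ (2 * k) = 4 ^ k" by (simp add: power_mult)
    ultimately show "dd (2 * k) * (2 * x) ^ (2 * k) * (if even (2 * k) then (-1) ^ (2 * k div 2) else 0) = ee k * x ^ (2 * k)"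
      by (simp add: ee_def)
  qed
  ultimately show ?thesis by simp
qed

definition tt :: "complex fps" where "tt = fps_tan 1"

lemma tt_ode: "fps_deriv tt = 1 + tt ^ 2"
proof -
  define C where "C = fps_cos (1::complex)"
  define S where "S = fps_sin (1::complex)"
  have C0: "C $ 0 \<noteq> 0" by (simp add: C_def fps_cos_def)
  have C20: "(C ^ 2) $ 0 \<noteq> 0" using C0 by (simp add: power2_eq_square)
  have iC: "C * inverse C = 1" using C0 by (rule inverse_mult_eq_1')
  have t: "tt = S * inverse C" by (simp add: tt_def fps_tan_def C_def S_def fps_divide_unit C0[unfolded C_def])
  have "fps_deriv tt = 1 / C ^ 2" by (simp add: tt_def fps_tan_deriv C_def)
  also have "\<dots> = inverse C ^ 2" using C20 by (simp add: fps_divide_unit fps_inverse_power)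
  also have "\<dots> = (C ^ 2 + S ^ 2) * inverse C ^ 2"
    by (simp add: C_def S_def fps_sin_cos_sum_of_squares)
  also have "\<dots> = (C * inverse C) ^ 2 + (S * inverse C) ^ 2" by (simp add: power_mult_distrib algebra_simps)
  also have "\<dots> = 1 + tt ^ 2" by (simp add: iC t)
  finally show ?thesis .
qed

lemma tt_0: "tt $ 0 = 0"
  by (simp add: tt_def fps_tan_def fps_divide_unit fps_cos_def fps_sin_def)

lemma tt_rec: "of_nat (Suc n) * tt $ Suc n = (if n = 0 then 1 else 0) + (\<Sum>i=0..n. tt $ i * tt $ (n - i))"
proof -
  have "fps_deriv tt $ n = (1 + tt ^ 2) $ n" by (simp add: tt_ode)
  thus ?thesis by (simp add: power2_eq_square fps_mult_nth)
qed

definition nnc :: "complex \<Rightarrow> bool" where "nnc z \<longleftrightarrow> Im z = 0 \<and> Re z \<ge> 0"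

lemma nnc_sum: "(\<And>i. i \<in> A \<Longrightarrow> nnc (f i)) \<Longrightarrow> nnc (sum f A)"
  unfolding nnc_def by (simp add: Im_sum Re_sum sum_nonneg)

lemma nnc_mult: "nnc a \<Longrightarrow> nnc b \<Longrightarrow> nnc (a * b)"
  unfolding nnc_def by simp

lemma tt_nn: "nnc (tt $ n)"
proof (induction n rule: less_induct)
  case (less n)
  show ?case
  proof (cases n)
    case 0 thus ?thesis by (simp add: tt_0 nnc_def)
  next
    case (Suc m)
    have "nnc ((if m = 0 then 1 else 0) + (\<Sum>i=0..m. tt $ i * tt $ (m - i)))"
      unfolding nnc_def[symmetric]
    proof -
      have "nnc (\<Sum>i=0..m. tt $ i * tt $ (m - i))"
        by (intro nnc_sum nnc_mult less) (auto simp: Suc)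
      thus "nnc ((if m = 0 then 1 else 0) + (\<Sum>i=0..m. tt $ i * tt $ (m - i)))"
        by (auto simp: nnc_def)
    qed
    hence "nnc (of_nat (Suc m) * tt $ Suc m)" by (subst tt_rec)
    hence "nnc (tt $ Suc m)"
      by (auto simp: nnc_def zero_le_mult_iff)
    thus ?thesis by (simp add: Suc)
  qed
qed

lemma tt_pos: "Re (tt $ (2 * k + 1)) > 0"
proof (induction k)
  case 0
  have "of_nat (Suc 0) * tt $ Suc 0 = 1" by (subst tt_rec) (simp add: tt_0)
  thus ?case by simp
next
  case (Suc k)
  let ?m = "2 * k + 2"
  have "Re (tt $ 1 * tt $ (?m - 1)) \<le> Re (\<Sum>i=0..?m. tt $ i * tt $ (?m - i))"
    unfolding Re_sum
  proof (rule member_le_sum)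
    fix i assume "i \<in> {0..?m} - {1}"
    show "0 \<le> Re (tt $ i * tt $ (?m - i))" using nnc_mult[OF tt_nn tt_nn] by (simp add: nnc_def)
  qed auto
  moreover have "Re (tt $ 1 * tt $ (?m - 1)) > 0"
  proof -
    have "tt $ 1 = 1" using tt_rec[of 0] by (simp add: tt_0)
    moreover have "?m - 1 = 2 * k + 1" by simp
    ultimately show ?thesis using Suc.IH by simp
  qed
  ultimately have "Re (\<Sum>i=0..?m. tt $ i * tt $ (?m - i)) > 0" by linarith
  moreover have "of_nat (Suc ?m) * tt $ Suc ?m = (\<Sum>i=0..?m. tt $ i * tt $ (?m - i))"
    by (subst tt_rec) simp
  ultimately have "Re (of_nat (Suc ?m) * tt $ Suc ?m) > 0" by simp
  hence "Re (tt $ Suc ?m) > 0" using tt_nn[of "Suc ?m"]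
    by (auto simp: nnc_def zero_less_mult_iff)
  thus ?case by (simp add: numeral_eq_Suc)
qed

lemma exp_ne_1:
  fixes w :: complex
  assumes "w \<noteq> 0" "norm w < 2 * pi"
  shows "exp w \<noteq> 1"
proof
  assume "exp w = 1"
  then obtain n :: int where n: "Re w = 0" "Im w = of_int (2 * n) * pi"
    by (auto simp: exp_eq_1)
  have "norm w = \<bar>Im w\<bar>" using n(1) by (simp add: cmod_def)
  also have "\<dots> = 2 * pi * \<bar>of_int n\<bar>" using n(2) by (simp add: abs_mult)
  finally have "\<bar>of_int n\<bar> < (1::real)" using assms by simp
  hence "n = 0" by linarith
  thus False using n assms by (simp add: complex_eq_iff)
qed

lemma tan_G:
  assumes "norm z < pi / 2"
  shows "z * tan z = G (2 * \<i> * z) - G (4 * \<i> * z) - \<i> * z"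
proof (cases "z = 0")
  case True thus ?thesis by (simp add: G_0)
next
  case False
  define v where "v = exp (\<i> * z)"
  define u where "u = v ^ 2"
  have v0: "v \<noteq> 0" by (simp add: v_def)
  have u2: "exp (2 * \<i> * z) = u"
    by (simp add: u_def v_def power2_eq_square exp_add[symmetric] algebra_simps)
  have u4: "exp (4 * \<i> * z) = u ^ 2"
    by (simp add: u_def v_def power2_eq_square exp_add[symmetric] algebra_simps)
  have n2: "norm (2 * \<i> * z) < 2 * pi" "norm (4 * \<i> * z) < 2 * pi"
    using assms pi_gt_zero norm_ge_zero[of z] by (simp_all add: norm_mult, linarith)
  have "exp (4 * \<i> * z) \<noteq> 1" using n2 False by (intro exp_ne_1) auto
  hence uu: "(u - 1) * (u + 1) \<noteq> 0" unfolding u4 by (simp add: power2_eq_square algebra_simps)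
  hence um: "u - 1 \<noteq> 0" and up: "u + 1 \<noteq> 0" by auto
  have g2: "G (2 * \<i> * z) = 2 * \<i> * z / (u - 1)"
  proof -
    have "G (2 * \<i> * z) * (u - 1) = 2 * \<i> * z" using G_eq[OF n2(1)] unfolding u2 .
    thus ?thesis using um by (simp add: field_simps)
  qed
  have g4: "G (4 * \<i> * z) = 4 * \<i> * z / ((u - 1) * (u + 1))"
  proof -
    have "G (4 * \<i> * z) * (u ^ 2 - 1) = 4 * \<i> * z" using G_eq[OF n2(2)] unfolding u4 .
    moreover have "u ^ 2 - 1 = (u - 1) * (u + 1)" by (simp add: power2_eq_square algebra_simps)
    ultimately show ?thesis using uu by (simp add: field_simps)
  qed
  have em: "exp (- (\<i> * z)) = inverse v" by (simp add: v_def exp_minus)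
  have c: "cos z * (2 * v) = u + 1"
    using v0 by (simp add: cos_exp_eq em u_def power2_eq_square field_simps v_def[symmetric])
  have s: "sin z * (2 * \<i> * v) = u - 1"
    using v0 by (simp add: sin_exp_eq em u_def power2_eq_square field_simps v_def[symmetric])
  have cz: "cos z \<noteq> 0" using c up by auto
  have t: "tan z = - \<i> * (u - 1) / (u + 1)"
  proof -
    have "tan z * (u + 1) = sin z * (2 * v)" using cz by (simp add: tan_def c[symmetric])
    also have "\<dots> = - \<i> * (u - 1)" using s[symmetric] by (simp add: algebra_simps)
    finally show ?thesis using up by (simp add: field_simps)
  qed
  define q where "q = 1 / (u + 1)"
  define r where "r = 1 / (u - 1)"
  have q: "q * (u + 1) = 1" using up by (simp add: q_def)
  have r: "r * (u - 1) = 1" using um by (simp add: r_def)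
  have "z * (- \<i> * (u - 1) * q) = 2 * \<i> * z * r - 4 * \<i> * z * (r * q) - \<i> * z"
    using q r by algebra
  thus ?thesis unfolding t g2 g4 q_def r_def by (simp add: divide_simps)
qed

lemma tan_fps:
  "fps_X * tt = (Bc oo (fps_const (2 * \<i>) * fps_X)) - (Bc oo (fps_const (4 * \<i>) * fps_X))
      - fps_const \<i> * fps_X"
proof -
  have h1: "(\<lambda>z. z * tan z) has_fps_expansion fps_X * tt"
    unfolding tt_def by (intro has_fps_expansion_mult has_fps_expansion_fps_X has_fps_expansion_tan')
  have c2: "(G \<circ> (\<lambda>z. 2 * \<i> * z)) has_fps_expansion (Bc oo (fps_const (2 * \<i>) * fps_X))"
    by (intro has_fps_expansion_compose G_exp has_fps_expansion_cmult_left has_fps_expansion_fps_X) simp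
  have c4: "(G \<circ> (\<lambda>z. 4 * \<i> * z)) has_fps_expansion (Bc oo (fps_const (4 * \<i>) * fps_X))"
    by (intro has_fps_expansion_compose G_exp has_fps_expansion_cmult_left has_fps_expansion_fps_X) simp
  have ci: "(\<lambda>z. \<i> * z) has_fps_expansion fps_const \<i> * fps_X"
    by (intro has_fps_expansion_cmult_left has_fps_expansion_fps_X)
  have h2: "(\<lambda>z. G (2 * \<i> * z) - G (4 * \<i> * z) - \<i> * z) has_fps_expansion
      (Bc oo (fps_const (2 * \<i>) * fps_X)) - (Bc oo (fps_const (4 * \<i>) * fps_X)) - fps_const \<i> * fps_X"
    using has_fps_expansion_diff[OF has_fps_expansion_diff[OF c2 c4] ci] by (simp add: o_def)
  have ev: "eventually (\<lambda>z. z * tan z = G (2 * \<i> * z) - G (4 * \<i> * z) - \<i> * z) (nhds 0)"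
  proof -
    have "eventually (\<lambda>z. z \<in> ball (0::complex) (pi / 2)) (nhds 0)"
      by (intro eventually_nhds_in_open) auto
    thus ?thesis by eventually_elim (auto intro: tan_G)
  qed
  have "(\<lambda>z. G (2 * \<i> * z) - G (4 * \<i> * z) - \<i> * z) has_fps_expansion fps_X * tt"
    using h1 has_fps_expansion_cong[OF ev refl] by simp
  thus ?thesis using h2 by (rule fps_expansion_unique_complex)
qed

lemma tt_bern:
  assumes "k \<ge> 1"
  shows "tt $ (2 * k - 1) = of_real (((-4) ^ k - (-16) ^ k) * (bernoulli (2 * k) / fact (2 * k)))"
proof -
  have "(fps_X * tt) $ (2 * k) = tt $ (2 * k - 1)" using assms by simp
  also note tan_fps
  finally have "tt $ (2 * k - 1) = (2 * \<i>) ^ (2 * k) * Bc $ (2 * k) - (4 * \<i>) ^ (2 * k) * Bc $ (2 * k)"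
    using assms by simp
  also have "(2 * \<i>) ^ (2 * k) = (-4 :: complex) ^ k" by (simp add: power_mult power_mult_distrib)
  also have "(4 * \<i>) ^ (2 * k) = (-16 :: complex) ^ k" by (simp add: power_mult power_mult_distrib)
  finally show ?thesis by (simp add: Bc_nth algebra_simps)
qed

lemma bern_sign:
  assumes "k \<ge> 1"
  shows "(-1) ^ k * bernoulli (2 * k) < 0"
proof -
  have "Re (tt $ (2 * (k - 1) + 1)) > 0" by (rule tt_pos)
  moreover have "2 * (k - 1) + 1 = 2 * k - 1" using assms by simp
  ultimately have "Re (tt $ (2 * k - 1)) > 0" by simp
  hence "((-4) ^ k - (-16) ^ k) * (bernoulli (2 * k) / fact (2 * k)) > 0"
    unfolding tt_bern[OF assms] Re_complex_of_real .
  moreover have a: "(-4::real) ^ k = (-1) ^ k * 4 ^ k" using power_mult_distrib[of "-1::real" 4 k] by simp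
  moreover have b: "(-16::real) ^ k = (-1) ^ k * 16 ^ k" using power_mult_distrib[of "-1::real" 16 k] by simp
  ultimately have "(((-1) ^ k * bernoulli (2 * k)) * (4 ^ k - 16 ^ k)) * (1 / fact (2 * k)) > 0"
    by (simp only: a b) (simp add: algebra_simps)
  moreover have "fact (2 * k) > (0::real)" by simp
  ultimately have "(((-1) ^ k * bernoulli (2 * k)) * (4 ^ k - 16 ^ k)) * (1 / fact (2 * k)) * fact (2 * k) > 0"
    by (rule mult_pos_pos)
  hence "((-1) ^ k * bernoulli (2 * k)) * (4 ^ k - 16 ^ k) > 0"
    by simp
  moreover have "(4::real) ^ k < 16 ^ k" using assms by (intro power_strict_mono) auto
  ultimately show ?thesis by (simp add: zero_less_mult_iff)
qed

lemma ee_coeff: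
  assumes "k \<ge> 1"
  shows "ee k = a_coeff k"
proof -
  have s: "(-1) ^ k * bernoulli (2 * k) < 0" by (rule bern_sign[OF assms])
  have "\<bar>bernoulli (2 * k)\<bar> = \<bar>(-1) ^ k * bernoulli (2 * k)\<bar>" by (simp add: abs_mult)
  also have "\<dots> = - ((-1) ^ k * bernoulli (2 * k))" using s by simp
  finally have ab: "\<bar>bernoulli (2 * k)\<bar> = - ((-1) ^ k * bernoulli (2 * k))" .
  show ?thesis unfolding ee_def dd_def a_coeff_def ab by (simp add: algebra_simps)
qed

lemma ee_0: "ee 0 = 2" by (simp add: ee_def dd_def bernoulli.simps)

lemma ee_1: "ee 1 = 0" by (simp add: ee_def dd_def)

lemma ee_pos:
  assumes "k \<ge> 2"
  shows "ee k > 0"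
proof -
  have "(-1) ^ k * bernoulli (2 * k) < 0" by (rule bern_sign) (use assms in auto)
  hence "bernoulli (2 * k) \<noteq> 0" by auto
  hence "\<bar>bernoulli (2 * k)\<bar> > 0" by simp
  moreover have "2 * real k - 2 > 0" using assms by simp
  ultimately have "a_coeff k > 0" unfolding a_coeff_def by (intro divide_pos_pos mult_pos_pos) auto
  thus ?thesis using ee_coeff[of k] assms by simp
qed

lemma ee_nonneg: "k \<ge> 1 \<Longrightarrow> ee k \<ge> 0"
  using ee_pos[of k] ee_1 by (cases "k = 1") auto

lemma psum:
  fixes x :: real
  assumes "N \<ge> 2"
  shows "(\<Sum>k<N. ee k * x ^ (2 * k)) = 2 + (\<Sum>k=2..N-1. a_coeff k * x ^ (2 * k))"
  using assms
proof (induction N rule: dec_induct)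
  case base
  show ?case by (simp add: numeral_eq_Suc ee_0 ee_1[unfolded One_nat_def])
next
  case (step N)
  have "(\<Sum>k<Suc N. ee k * x ^ (2 * k)) = (\<Sum>k<N. ee k * x ^ (2 * k)) + ee N * x ^ (2 * N)" by simp
  also have "\<dots> = 2 + (\<Sum>k=2..N-1. a_coeff k * x ^ (2 * k)) + a_coeff N * x ^ (2 * N)"
    using step ee_coeff[of N] by simp
  finally have A: "(\<Sum>k<Suc N. ee k * x ^ (2 * k)) = 2 + (\<Sum>k=2..N-1. a_coeff k * x ^ (2 * k)) + a_coeff N * x ^ (2 * N)" .
  have B: "(\<Sum>k=2..N-1. a_coeff k * x ^ (2 * k)) + a_coeff N * x ^ (2 * N) = (\<Sum>k=2..N. a_coeff k * x ^ (2 * k))"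
  proof -
    obtain M where M: "N = Suc M" using step(1) by (cases N) auto
    show ?thesis using step(1) unfolding M by (simp add: sum.cl_ivl_Suc)
  qed
  show ?case using A B by simp
qed

theorem theorem5:
  fixes x :: real and m :: nat
  assumes "0 < x" and "x < pi / 2" and "2 \<le> m"
  shows "2 + (\<Sum>k=2..m-1. a_coeff k * x ^ (2*k))
           + (2 * x / pi) ^ (2*m) * (pi^2 / 4 - 2 - (\<Sum>k=2..m-1. a_coeff k * (pi/2) ^ (2*k)))
         > (x / sin x)^2 + x / tan x
       \<and> (x / sin x)^2 + x / tan x > 2 + (\<Sum>k=2..m. a_coeff k * x ^ (2*k))"
proof
  define y where "y = pi / 2"
  have y: "0 < y" "y < pi" "x < y" using assms pi_gt_zero by (auto simp: y_def)
  define T where "T = (\<lambda>z k. ee k * z ^ (2 * k))"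
  have sx: "T x sums ((x / sin x)^2 + x / tan x)"
    unfolding T_def by (rule f_series) (use assms y in auto)
  have fy: "(y / sin y)^2 + y / tan y = pi^2 / 4"
    by (simp add: y_def tan_def power_divide)
  have sy: "T y sums (pi^2 / 4)"
    unfolding T_def fy[symmetric] by (rule f_series) (use y in auto)
  define q where "q = x / y"
  have q: "0 < q" "q < 1" using y assms by (auto simp: q_def)
  have q2: "q ^ (2 * m) = (2 * x / pi) ^ (2 * m)" by (simp add: q_def y_def mult.commute)
  show "(x / sin x)^2 + x / tan x > 2 + (\<Sum>k=2..m. a_coeff k * x ^ (2*k))"
  proof -
    have "sum (T x) {..<Suc m} < suminf (T x)"
    proof (rule sum_less_suminf)
      show "summable (T x)" using sx by (rule sums_summable)
      fix j assume "Suc m \<le> j"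
      hence "ee j > 0" using assms by (intro ee_pos) auto
      thus "0 < T x j" using assms by (simp add: T_def)
    qed
    moreover have "sum (T x) {..<Suc m} = 2 + (\<Sum>k=2..m. a_coeff k * x ^ (2*k))"
      unfolding T_def using psum[of "Suc m" x] assms by simp
    ultimately show ?thesis using sums_unique[OF sx] by simp
  qed
  show "2 + (\<Sum>k=2..m-1. a_coeff k * x ^ (2*k))
           + (2 * x / pi) ^ (2*m) * (pi^2 / 4 - 2 - (\<Sum>k=2..m-1. a_coeff k * (pi/2) ^ (2*k)))
         > (x / sin x)^2 + x / tan x"
  proof -
    let ?fx = "(x / sin x)^2 + x / tan x"
    have rx: "(\<lambda>j. T x (j + m)) sums (?fx - sum (T x) {..<m})"
      using sx by (subst sums_iff_shift) simp
    have ry: "(\<lambda>j. q ^ (2 * m) * T y (j + m)) sums (q ^ (2 * m) * (pi^2/4 - sum (T y) {..<m}))"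
      using sy by (intro sums_mult) (subst sums_iff_shift; simp)
    define D where "D = (\<lambda>j. q ^ (2 * m) * T y (j + m) - T x (j + m))"
    have sD: "D sums (q ^ (2 * m) * (pi^2/4 - sum (T y) {..<m}) - (?fx - sum (T x) {..<m}))"
      unfolding D_def by (rule sums_diff[OF ry rx])
    have Teq: "T x (j + m) = q ^ (2 * m) * T y (j + m) * (q ^ 2) ^ j" for j
    proof -
      have "x = q * y" using y by (simp add: q_def)
      hence "x ^ (2 * (j + m)) = q ^ (2 * m) * (q ^ 2) ^ j * y ^ (2 * (j + m))"
        by (simp add: power_mult_distrib power_add power_mult[symmetric] algebra_simps)
      thus ?thesis by (simp add: T_def)
    qed
    have Dj: "D j = q ^ (2 * m) * T y (j + m) * (1 - (q ^ 2) ^ j)" for j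
      unfolding D_def Teq by (simp add: algebra_simps)
    have "sum D {..<0} < suminf D"
    proof (rule sum_less_suminf2)
      show "summable D" using sD by (rule sums_summable)
      fix j :: nat
      have "ee (j + m) \<ge> 0" using assms by (intro ee_nonneg) auto
      hence "T y (j + m) \<ge> 0" using y by (simp add: T_def)
      moreover have "(q ^ 2) ^ j \<le> 1" using q by (intro power_le_one) auto
      ultimately show "0 \<le> D j" unfolding Dj using q by simp
    next
      have "ee (1 + m) > 0" using assms by (intro ee_pos) auto
      hence "T y (1 + m) > 0" using y by (simp add: T_def)
      moreover have "q ^ 2 < 1" using q by (simp add: power_less_one_iff)
      ultimately show "0 < D 1" unfolding Dj using q by simp
    qed auto
    hence "0 < q ^ (2 * m) * (pi^2/4 - sum (T y) {..<m}) - (?fx - sum (T x) {..<m})"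
      using sums_unique[OF sD] by simp
    moreover have "sum (T x) {..<m} = 2 + (\<Sum>k=2..m-1. a_coeff k * x ^ (2*k))"
      unfolding T_def using psum[of m x] assms by simp
    moreover have "sum (T y) {..<m} = 2 + (\<Sum>k=2..m-1. a_coeff k * (pi/2) ^ (2*k))"
      unfolding T_def using psum[of m y] assms by (simp add: y_def)
    ultimately show ?thesis unfolding q2 by (simp add: algebra_simps)
  qed
qed

end
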